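(* Let $n\mid(q-1)$, let $\delta\ge2$, $b\ge1$, $m\ge1$ be integers with $\gcd(b,n)=1$, let $t\in\{0,\dots,n-1\}$ and let $\ell$ be an integer with $m-1+\delta\le\ell\le n-\delta$. Put $$A=\{\alpha^{t},\alpha^{t+b},\dots,\alpha^{t+(m-1)b},\alpha^{t+\ell b}\},\qquad B=\{1,\alpha^{b},\dots,\alpha^{(\delta-2)b}\},$$ and let $d_A^{\perp}$ be the minimum distance of the dual of $C_A$. Then $C_{AB}$ is a cyclic $(d_A^{\perp}-\delta+1,\delta)$-LRC over $\mathbb{F}_q$ with dimension $n-m-2\delta+3$. If moreover $\delta-2<n-m-d_A^{\perp}$, then $C_{AB}$ is an optimal $(d_A^{\perp}-\delta+1,\delta)$-LRC with minimum distance $m+\delta-1$.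
   Context: Let $q$ be a prime power and $n\mid(q-1)$, so the set $R_n$ of all $n$-th roots of unity lies in $\mathbb{F}_q$; let $\alpha\in\mathbb{F}_q$ be a primitive $n$-th root of unity. For $A,B\subseteq R_n$, $AB=\{\beta\gamma:\beta\in A,\gamma\in B\}$, and for $Z\subseteq R_n$, $C_Z$ denotes the cyclic code of length $n$ over $\mathbb{F}_q$ with complete defining set $Z$, i.e. the ideal generated by $\prod_{\beta\in Z}(x-\beta)$ in $\mathbb{F}_q[x]/(x^n-1)$, identified with a subspace of $\mathbb{F}_q^n$; it has dimension $n-|Z|$. Locality: for a linear code $C\subseteq\mathbb{F}_q^n$ and integers $r\ge1$, $\delta\ge2$, the $i$-th coordinate has $(r,\delta)$-locality if there is $S_i\subseteq\{1,\dots,n\}$ with $i\in S_i$, $|S_i|\le r+\delta-1$ such that the punctured code $C|_{S_i}$ has minimum distance at least $\delta$; $C$ is an $(r,\delta)$-LRC if every coordinate has $(r,\delta)$-locality. An $[n,k,d]$ $(r,\delta)$-LRC is optimal if $d=n-k-(\lceil k/r\rceil-1)(\delta-1)+1$ (this quantity is always an upper bound on $d$). *)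

theory Defs
  imports "HOL-Computational_Algebra.Polynomial" "HOL-Library.Function_Algebras" Complex_Main
begin

text \<open>Words of length n over a field are modelled as functions nat => 'a that vanish
  at all indices >= n; coordinates are indexed by 0,...,n-1.\<close>

definition words :: "nat \<Rightarrow> (nat \<Rightarrow> 'a::zero) set" where
  "words n = {c. \<forall>i\<ge>n. c i = 0}"

definition scale_word :: "'a::field \<Rightarrow> (nat \<Rightarrow> 'a) \<Rightarrow> (nat \<Rightarrow> 'a)" where
  "scale_word a c = (\<lambda>i. a * c i)"

definition code_dim :: "(nat \<Rightarrow> 'a::field) set \<Rightarrow> nat" where
  "code_dim C = vector_space.dim scale_word C"

definition roots_of_unity :: "nat \<Rightarrow> 'a::field set" where
  "roots_of_unity n = {x. x ^ n = 1}"

definition primitive_root_of_unity :: "nat \<Rightarrow> 'a::field \<Rightarrow> bool" where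
  "primitive_root_of_unity n \<alpha> \<longleftrightarrow> 0 < n \<and> \<alpha> ^ n = 1 \<and> (\<forall>k. 0 < k \<and> k < n \<longrightarrow> \<alpha> ^ k \<noteq> 1)"

definition set_prod :: "'a::times set \<Rightarrow> 'a set \<Rightarrow> 'a set" where
  "set_prod A B = {\<beta> * \<gamma> | \<beta> \<gamma>. \<beta> \<in> A \<and> \<gamma> \<in> B}"

text \<open>Cyclic code of length n with complete defining set Z: the ideal generated by
  prod_{beta in Z} (x - beta) in F[x]/(x^n - 1), identified with coefficient vectors.\<close>
definition cyclic_code :: "nat \<Rightarrow> 'a::field set \<Rightarrow> (nat \<Rightarrow> 'a) set" where
  "cyclic_code n Z =
     {(\<lambda>i. coeff ((f * (\<Prod>\<beta>\<in>Z. [:-\<beta>, 1:])) mod (monom 1 n - 1)) i) | f. True}"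

definition dual_code :: "nat \<Rightarrow> (nat \<Rightarrow> 'a::field) set \<Rightarrow> (nat \<Rightarrow> 'a) set" where
  "dual_code n C = {y \<in> words n. \<forall>c\<in>C. (\<Sum>i<n. c i * y i) = 0}"

definition is_cyclic :: "nat \<Rightarrow> (nat \<Rightarrow> 'a::zero) set \<Rightarrow> bool" where
  "is_cyclic n C \<longleftrightarrow> (\<forall>c\<in>C. (\<lambda>i. if i < n then c ((i + n - 1) mod n) else 0) \<in> C)"

definition hdist_on :: "nat set \<Rightarrow> (nat \<Rightarrow> 'a) \<Rightarrow> (nat \<Rightarrow> 'a) \<Rightarrow> nat" where
  "hdist_on S x y = card {i\<in>S. x i \<noteq> y i}"

definition min_dist :: "nat \<Rightarrow> (nat \<Rightarrow> 'a) set \<Rightarrow> nat" where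
  "min_dist n C = (LEAST w. \<exists>x\<in>C. \<exists>y\<in>C. (\<exists>i<n. x i \<noteq> y i) \<and> w = hdist_on {..<n} x y)"

definition punct_dist_ge :: "(nat \<Rightarrow> 'a) set \<Rightarrow> nat set \<Rightarrow> nat \<Rightarrow> bool" where
  "punct_dist_ge C S \<delta> \<longleftrightarrow>
     (\<forall>x\<in>C. \<forall>y\<in>C. (\<exists>i\<in>S. x i \<noteq> y i) \<longrightarrow> \<delta> \<le> hdist_on S x y)"

definition has_locality :: "nat \<Rightarrow> (nat \<Rightarrow> 'a) set \<Rightarrow> nat \<Rightarrow> nat \<Rightarrow> nat \<Rightarrow> bool" where
  "has_locality n C r \<delta> i \<longleftrightarrow>
     (\<exists>S. S \<subseteq> {..<n} \<and> i \<in> S \<and> card S \<le> r + \<delta> - 1 \<and> punct_dist_ge C S \<delta>)"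

definition is_LRC :: "nat \<Rightarrow> (nat \<Rightarrow> 'a) set \<Rightarrow> nat \<Rightarrow> nat \<Rightarrow> bool" where
  "is_LRC n C r \<delta> \<longleftrightarrow> 1 \<le> r \<and> 2 \<le> \<delta> \<and> (\<forall>i<n. has_locality n C r \<delta> i)"

definition is_optimal_LRC :: "nat \<Rightarrow> (nat \<Rightarrow> 'a::field) set \<Rightarrow> nat \<Rightarrow> nat \<Rightarrow> bool" where
  "is_optimal_LRC n C r \<delta> \<longleftrightarrow> is_LRC n C r \<delta> \<and>
     int (min_dist n C) = int n - int (code_dim C)
        - (\<lceil>real (code_dim C) / real r\<rceil> - 1) * (int \<delta> - 1) + 1"

end

theory Submission
  imports Defs "HOL-Library.FuncSet"
begin

interpretation W: vector_space "scale_word :: 'a::field \<Rightarrow> (nat \<Rightarrow> 'a) \<Rightarrow> _"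
  by unfold_locales (auto simp: scale_word_def algebra_simps)

lemma sum_fun_apply: "(sum f A) (i::'b) = (\<Sum>x\<in>A. (f x) i :: 'c::comm_monoid_add)"
  by (induction A rule: infinite_finite_induct) auto

definition ev :: "nat \<Rightarrow> (nat \<Rightarrow> 'a::field) \<Rightarrow> 'a \<Rightarrow> 'a" where
  "ev n v \<beta> = (\<Sum>i<n. v i * \<beta>^i)"
definition pw :: "nat \<Rightarrow> (nat \<Rightarrow> 'a::field) \<Rightarrow> 'a poly" where
  "pw n v = (\<Sum>i<n. monom (v i) i)"

lemma coeff_pw: "coeff (pw n v) i = (if i < n then v i else 0)"
  by (simp add: pw_def coeff_sum coeff_monom)

lemma poly_pw: "poly (pw n v) x = ev n v x"
  by (simp add: pw_def ev_def poly_sum poly_monom)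

lemma degree_pw: "n > 0 \<Longrightarrow> degree (pw n v) < n"
  by (rule degree_lessI) (auto simp: coeff_pw)

lemma ev_coeff: assumes "degree P < n" shows "ev n (\<lambda>i. coeff P i) x = poly P x"
proof -
  have "poly P x = (\<Sum>i\<le>degree P. coeff P i * x ^ i)" by (rule poly_altdef)
  also have "\<dots> = (\<Sum>i<n. coeff P i * x ^ i)"
    by (rule sum.mono_neutral_left) (use assms in \<open>auto simp: coeff_eq_0\<close>)
  finally show ?thesis by (simp add: ev_def)
qed

lemma coeff_words: "degree P < n \<Longrightarrow> (\<lambda>i. coeff P i) \<in> words n"
  by (auto simp: words_def coeff_eq_0)

lemma pw_coeff: "v \<in> words n \<Longrightarrow> (\<lambda>i. coeff (pw n v) i) = v"
  by (auto simp: coeff_pw words_def)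

lemma prod_dvd: "finite Z \<Longrightarrow> (\<forall>\<beta>\<in>Z. poly p \<beta> = 0) \<Longrightarrow> (\<Prod>\<beta>\<in>Z. [:-\<beta>, 1:]) dvd (p :: 'a::field poly)"
proof (induction Z arbitrary: p rule: finite_induct)
  case empty thus ?case by simp
next
  case (insert a Z)
  then obtain h where h: "p = (\<Prod>\<beta>\<in>Z. [:-\<beta>, 1:]) * h" by (auto elim!: dvdE)
  have "poly (\<Prod>\<beta>\<in>Z. [:-\<beta>, 1:]) a \<noteq> 0" using insert(1,2) by (auto simp: poly_prod prod_zero_iff)
  moreover have "poly p a = 0" using insert by auto
  ultimately have "poly h a = 0" using h by simp
  then obtain h' where "h = [:-a,1:] * h'" by (auto simp: poly_eq_0_iff_dvd elim!: dvdE)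
  then have "p = ([:-a,1:] * (\<Prod>\<beta>\<in>Z. [:-\<beta>, 1:])) * h'" using h by (simp only: ac_simps)
  then show ?case using insert(1,2) by simp
qed

lemma cyc_char:
  assumes "n > 0" "finite Z" "\<forall>\<beta>\<in>Z. \<beta>^n = (1::'a::field)"
  shows "cyclic_code n Z = {v \<in> words n. \<forall>\<beta>\<in>Z. ev n v \<beta> = 0}"
proof -
  let ?g = "\<Prod>\<beta>\<in>Z. [:-\<beta>, 1:]" and ?X = "monom (1::'a) n - 1"
  have dX: "degree ?X = n"
  proof (rule antisym)
    show "degree ?X \<le> n" by (rule degree_diff_le) (auto simp: degree_monom_le)
    show "n \<le> degree ?X" using assms(1) by (intro le_degree) (simp add: coeff_monom)
  qed
  have X0: "?X \<noteq> 0" using dX assms(1) by auto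
  have pX: "poly ?X \<beta> = 0" if "\<beta> \<in> Z" for \<beta> using assms(3) that by (simp add: poly_monom)
  show ?thesis
  proof (intro set_eqI iffI)
    fix v assume "v \<in> cyclic_code n Z"
    then obtain f where v: "v = (\<lambda>i. coeff ((f * ?g) mod ?X) i)" by (auto simp: cyclic_code_def)
    define P where "P = (f * ?g) mod ?X"
    have dP: "degree P < n"
      using degree_mod_less[OF X0, of "f * ?g"] dX assms(1) by (auto simp: P_def)
    have "poly P \<beta> = 0" if "\<beta> \<in> Z" for \<beta>
    proof -
      have "f * ?g = (f * ?g div ?X) * ?X + P" unfolding P_def by (rule div_mult_mod_eq[symmetric])
      hence "poly (f * ?g) \<beta> = poly ((f * ?g div ?X) * ?X + P) \<beta>" by simp
      moreover have "poly ?g \<beta> = 0" using that assms(2) by (auto simp: poly_prod)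
      ultimately show ?thesis using pX[OF that] by simp
    qed
    then show "v \<in> {v \<in> words n. \<forall>\<beta>\<in>Z. ev n v \<beta> = 0}"
      using v dP by (simp add: P_def[symmetric] coeff_words ev_coeff)
  next
    fix v assume v: "v \<in> {v \<in> words n. \<forall>\<beta>\<in>Z. ev n v \<beta> = 0}"
    have "?g dvd pw n v" using v assms(2) by (intro prod_dvd) (auto simp: poly_pw)
    then obtain h where h: "pw n v = ?g * h" by (auto elim!: dvdE)
    have "(h * ?g) mod ?X = pw n v"
      using h degree_pw[OF assms(1), of v] dX by (simp add: mult.commute mod_poly_less)
    then have "v = (\<lambda>i. coeff ((h * ?g) mod ?X) i)" using pw_coeff[of v n] v by simp
    then show "v \<in> cyclic_code n Z" by (auto simp: cyclic_code_def)
  qed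
qed

lemma bch:
  fixes z x :: "nat \<Rightarrow> 'a::field"
  assumes inj: "inj_on x {..<n}" and eqs: "\<forall>j<L. (\<Sum>i<n. z i * x i ^ j) = 0"
    and nz: "\<exists>i<n. z i \<noteq> 0"
  shows "L < card {i. i < n \<and> z i \<noteq> 0}"
proof (rule ccontr)
  define T where "T = {i. i < n \<and> z i \<noteq> 0}"
  assume "\<not> L < card {i. i < n \<and> z i \<noteq> 0}"
  hence TL: "card T \<le> L" by (simp add: T_def)
  obtain k where k: "k < n" "z k \<noteq> 0" using nz by auto
  have fT: "finite T" by (simp add: T_def)
  have kT: "k \<in> T" using k by (simp add: T_def)
  define p where "p = (\<Prod>i\<in>T-{k}. [:- x i, 1:])"
  have "degree p \<le> sum (degree \<circ> (\<lambda>i. [:- x i, 1:])) (T-{k})"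
    unfolding p_def by (rule degree_prod_sum_le) (use fT in auto)
  also have "\<dots> = card (T - {k})" by simp
  also have "\<dots> < card T" using fT kT by (meson card_Diff1_less)
  finally have dp: "degree p < L" using TL by linarith
  have "(\<Sum>i<n. z i * poly p (x i)) = (\<Sum>i<n. z i * (\<Sum>j\<le>degree p. coeff p j * x i ^ j))"
    by (simp add: poly_altdef)
  also have "\<dots> = (\<Sum>j\<le>degree p. coeff p j * (\<Sum>i<n. z i * x i ^ j))"
    by (simp add: sum_distrib_left sum_distrib_right mult_ac sum.swap[of _ "{..<n}"])
  also have "\<dots> = 0" using eqs dp by simp
  finally have s0: "(\<Sum>i<n. z i * poly p (x i)) = 0" .
  have "(\<Sum>i<n. z i * poly p (x i)) = (\<Sum>i\<in>{k}. z i * poly p (x i))"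
  proof (rule sum.mono_neutral_right)
    show "\<forall>i\<in>{..<n} - {k}. z i * poly p (x i) = 0"
    proof
      fix i assume i: "i \<in> {..<n} - {k}"
      show "z i * poly p (x i) = 0"
      proof (cases "z i = 0")
        case False
        hence "i \<in> T - {k}" using i by (simp add: T_def)
        hence "poly p (x i) = 0" unfolding p_def using fT
          by (auto simp: poly_prod prod_zero_iff)
        thus ?thesis by simp
      qed simp
    qed
  qed (use k in auto)
  moreover have "poly p (x k) \<noteq> 0"
  proof
    assume "poly p (x k) = 0"
    then obtain i where "i \<in> T - {k}" "x k = x i" unfolding p_def using fT
      by (auto simp: poly_prod prod_zero_iff)
    moreover have "i < n" using \<open>i \<in> T - {k}\<close> by (simp add: T_def)
    ultimately show False using inj k(1) by (auto dest: inj_onD)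
  qed
  ultimately show False using s0 k(2) by simp
qed

definition rot :: "nat \<Rightarrow> nat \<Rightarrow> (nat \<Rightarrow> 'a::zero) \<Rightarrow> (nat \<Rightarrow> 'a)" where
  "rot n s v = (\<lambda>k. if k < n then v ((k + s) mod n) else 0)"

lemma rot_inv1: "(n::nat) > 0 \<Longrightarrow> k < n \<Longrightarrow> ((k + s) mod n + (n - s mod n)) mod n = (k::nat)"
proof -
  assume n: "n > 0" "k < n"
  have e: "s + (n - s mod n) = n * (s div n + 1)"
  proof -
    have "n * (s div n + 1) = n * (s div n) + n" by simp
    thus ?thesis using div_mult_mod_eq[of s n] mod_less_divisor[OF n(1), of s] mult.commute[of n "s div n"] by linarith
  qed
  have "((k + s) mod n + (n - s mod n)) mod n = (k + s + (n - s mod n)) mod n"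
    by (simp add: mod_add_left_eq)
  also have "\<dots> = (k + n * (s div n + 1)) mod n" using e by (simp add: add.assoc)
  also have "\<dots> = k" using n(2) by (simp only: mod_mult_self2 mod_less)
  finally show ?thesis .
qed

lemma rot_inv2: "(n::nat) > 0 \<Longrightarrow> j < n \<Longrightarrow> ((j + (n - s mod n)) mod n + s) mod n = (j::nat)"
proof -
  assume n: "n > 0" "j < n"
  have e: "s + (n - s mod n) = n * (s div n + 1)"
  proof -
    have "n * (s div n + 1) = n * (s div n) + n" by simp
    thus ?thesis using div_mult_mod_eq[of s n] mod_less_divisor[OF n(1), of s] mult.commute[of n "s div n"] by linarith
  qed
  have "((j + (n - s mod n)) mod n + s) mod n = (j + (n - s mod n) + s) mod n"
    by (rule mod_add_left_eq)
  also have "\<dots> = (j + (s + (n - s mod n))) mod n" by (simp only: add_ac)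
  also have "\<dots> = (j + n * (s div n + 1)) mod n" using e by simp
  also have "\<dots> = j" using n(2) by (simp only: mod_mult_self2 mod_less)
  finally show ?thesis .
qed

lemma rot_bij: assumes n: "(n::nat) > 0" shows "bij_betw (\<lambda>k. (k + s) mod n) {..<n} {..<n}"
proof -
  define r where "r = n - s mod n"
  show ?thesis
    by (rule bij_betw_byWitness[where f' = "\<lambda>j. (j + r) mod n"])
     (use rot_inv1[OF n, of _ s] rot_inv2[OF n, of _ s] in \<open>auto simp: r_def[symmetric]\<close>)
qed

lemma rot_sum: "(n::nat) > 0 \<Longrightarrow> (\<Sum>k<n. g ((k + s) mod n)) = (\<Sum>j<n. (g j :: 'b::comm_monoid_add))"
  using sum.reindex_bij_betw[OF rot_bij[of n s], of g] by simp

lemma rot_words: "rot n s v \<in> words n"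
  by (simp add: rot_def words_def)

lemma pow_mod_n: "\<beta>^n = (1::'a::field) \<Longrightarrow> \<beta>^a = \<beta>^(a mod n)"
proof -
  assume b: "\<beta>^n = 1"
  have "\<beta>^a = \<beta>^(n * (a div n) + a mod n)" by simp
  also have "\<dots> = (\<beta>^n)^(a div n) * \<beta>^(a mod n)" by (simp only: power_add power_mult)
  also have "\<dots> = \<beta>^(a mod n)" using b by simp
  finally show ?thesis .
qed

lemma ev_rot:
  assumes n: "n > 0" and b: "\<beta>^n = (1::'a::field)"
  shows "ev n (rot n s v) \<beta> = \<beta>^(n - s mod n) * ev n v \<beta>"
proof -
  define r where "r = n - s mod n"
  have "ev n (rot n s v) \<beta> = (\<Sum>k<n. v ((k + s) mod n) * \<beta>^k)"
    by (simp add: ev_def rot_def)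
  also have "\<dots> = (\<Sum>k<n. (\<lambda>j. v j * \<beta>^((j + r) mod n)) ((k + s) mod n))"
  proof (rule sum.cong[OF refl])
    fix k assume "k \<in> {..<n}"
    hence e: "((k + s) mod n + r) mod n = k" using rot_inv1[OF n, of k s] by (simp add: r_def)
    show "v ((k + s) mod n) * \<beta>^k = (\<lambda>j. v j * \<beta>^((j + r) mod n)) ((k + s) mod n)"
      by (simp only: e)
  qed
  also have "\<dots> = (\<Sum>j<n. v j * \<beta>^((j + r) mod n))" by (rule rot_sum[OF n])
  also have "\<dots> = (\<Sum>j<n. \<beta>^r * (v j * \<beta>^j))"
  proof (rule sum.cong[OF refl])
    fix j
    have "\<beta>^((j + r) mod n) = \<beta>^(j+r)" by (rule pow_mod_n[OF b, symmetric])
    thus "v j * \<beta>^((j + r) mod n) = \<beta>^r * (v j * \<beta>^j)" by (simp add: power_add)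
  qed
  finally show ?thesis by (simp add: ev_def sum_distrib_left r_def)
qed

lemma rot_weight:
  assumes n: "n > 0"
  shows "card {k. k < n \<and> rot n s v k \<noteq> 0} = card {k. k < n \<and> v k \<noteq> 0}"
proof -
  have c: "card {k. k < n \<and> P k} = (\<Sum>k<n. if P k then 1 else 0)" for P :: "nat \<Rightarrow> bool"
  proof -
    have "{k. k < n \<and> P k} = {k\<in>{..<n}. P k}" by auto
    thus ?thesis by (simp add: sum.inter_filter[symmetric])
  qed
  show ?thesis unfolding c
    using rot_sum[OF n, of "\<lambda>j. if v j \<noteq> 0 then 1::nat else 0" s]
    by (simp add: rot_def)
qed

lemma code_dim_cyc:
  fixes Z :: "'a::field set"
  assumes n: "n > 0" and fZ: "finite Z" and rZ: "\<forall>\<beta>\<in>Z. \<beta>^n = 1"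
  shows "code_dim (cyclic_code n Z) = n - card Z"
proof -
  let ?g = "\<Prod>\<beta>\<in>Z. [:-\<beta>,1:]"
  define k where "k = n - card Z"
  define bv where "bv j = (\<lambda>i. coeff (monom 1 j * ?g) i)" for j
  have g0: "?g \<noteq> 0" using fZ by (simp add: prod_zero_iff)
  have dg: "degree ?g = card Z" by (subst degree_prod_eq_sum_degree) auto
  have lg: "coeff ?g (card Z) = 1" using dg lead_coeff_prod[of "\<lambda>\<beta>. [:-\<beta>,1:]" Z] by simp
  have C: "cyclic_code n Z = {v\<in>words n. \<forall>\<beta>\<in>Z. ev n v \<beta> = 0}" by (rule cyc_char[OF n fZ rZ])
  have dbv: "degree (monom 1 j * ?g) = j + card Z" for j
    using g0 dg by (simp add: degree_mult_eq degree_monom_eq)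
  have bvC: "bv j \<in> cyclic_code n Z" if "j < k" for j
  proof -
    have d: "degree (monom 1 j * ?g) < n" using dbv that by (simp add: k_def)
    have "poly ?g \<beta> = 0" if "\<beta> \<in> Z" for \<beta> using that fZ by (auto simp: poly_prod)
    thus ?thesis using d unfolding C bv_def by (simp add: coeff_words ev_coeff)
  qed
  have sub: "W.subspace (cyclic_code n Z)"
    by (rule W.subspaceI) (auto simp: C words_def ev_def scale_word_def sum.distrib distrib_right mult.assoc simp flip: sum_distrib_left)
  have span: "cyclic_code n Z \<subseteq> W.span (bv ` {..<k})"
  proof
    fix v assume v: "v \<in> cyclic_code n Z"
    hence vw: "v \<in> words n" and ve: "\<forall>\<beta>\<in>Z. poly (pw n v) \<beta> = 0" by (auto simp: C poly_pw)
    obtain h where h: "pw n v = ?g * h" using prod_dvd[OF fZ ve] by (auto elim!: dvdE)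
    have hk: "coeff h j = 0" if "j \<ge> k" for j
    proof (cases "h = 0")
      case False
      have "degree (pw n v) = card Z + degree h" using h g0 False dg by (simp add: degree_mult_eq)
      moreover have "degree (pw n v) < n" by (rule degree_pw[OF n])
      ultimately have "degree h < k" by (simp add: k_def)
      thus ?thesis using that by (simp add: coeff_eq_0)
    qed simp
    have hs: "h = (\<Sum>j<k. monom (coeff h j) j)"
    proof (rule poly_eqI)
      fix i
      show "coeff h i = coeff (\<Sum>j<k. monom (coeff h j) j) i"
        using hk[of i] by (cases "i < k") (auto simp: coeff_sum coeff_monom)
    qed
    have "pw n v = (\<Sum>j<k. smult (coeff h j) (monom 1 j * ?g))"
      by (subst h, subst hs) (simp add: smult_monom_mult mult.commute[of ?g] sum_distrib_right)
    hence "v = (\<Sum>j<k. scale_word (coeff h j) (bv j))"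
      using pw_coeff[OF vw] by (auto simp: fun_eq_iff sum_fun_apply scale_word_def bv_def coeff_sum)
    moreover have "(\<Sum>j<k. scale_word (coeff h j) (bv j)) \<in> W.span (bv ` {..<k})"
      by (rule W.span_sum, rule W.span_scale, rule W.span_base) simp
    ultimately show "v \<in> W.span (bv ` {..<k})" by simp
  qed
  have eq: "W.span (bv ` {..<k}) = cyclic_code n Z"
    using W.span_minimal[of "bv ` {..<k}" "cyclic_code n Z"] bvC sub span by auto
  have key: "bv i (card Z + j) \<noteq> bv j (card Z + j)" if "i < j" for i j
  proof -
    have "bv j (card Z + j) = 1" using lg by (simp add: bv_def coeff_monom_mult)
    moreover have "bv i (card Z + j) = 0" using that dg
      by (auto simp: bv_def coeff_monom_mult intro!: coeff_eq_0)
    ultimately show ?thesis by simp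
  qed
  have inj: "inj_on bv {..<k}"
  proof (rule inj_onI)
    fix i j assume "i \<in> {..<k}" "j \<in> {..<k}" "bv i = bv j"
    then show "i = j" using key[of i j] key[of j i]
      by (metis linorder_neqE_nat)
  qed
  have indep: "W.independent (bv ` {..<k})"
  proof
    assume "W.dependent (bv ` {..<k})"
    then obtain u where u: "\<exists>v\<in>bv ` {..<k}. u v \<noteq> 0"
      "(\<Sum>v\<in>bv ` {..<k}. scale_word (u v) v) = 0"
      using W.dependent_finite[of "bv ` {..<k}"] by blast
    have s0: "(\<Sum>j<k. scale_word (u (bv j)) (bv j)) = 0"
      using u(2) sum.reindex[OF inj, of "\<lambda>v. scale_word (u v) v"] by simp
    define cc where "cc j = u (bv j)" for j
    define p where "p = (\<Sum>j<k. monom (cc j) j)"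
    have "coeff (p * ?g) i = 0" for i
    proof -
      have "(\<Sum>j<k. scale_word (u (bv j)) (bv j)) i = 0" using s0 by simp
      hence "(\<Sum>j<k. cc j * bv j i) = 0" by (simp add: sum_fun_apply scale_word_def cc_def)
      hence "(\<Sum>j<k. cc j * coeff (monom 1 j * ?g) i) = 0" by (simp add: bv_def)
      moreover have "coeff (p * ?g) i = (\<Sum>j<k. cc j * coeff (monom 1 j * ?g) i)"
        by (auto simp add: p_def sum_distrib_right coeff_sum coeff_monom_mult intro!: sum.cong)
      ultimately show ?thesis by simp
    qed
    hence "p * ?g = 0" by (simp add: poly_eq_iff)
    hence p0: "p = 0" using g0 by simp
    have "u (bv j) = 0" if "j < k" for j
    proof -
      have "coeff p j = cc j" using that by (simp add: p_def coeff_sum coeff_monom)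
      hence "coeff p j = u (bv j)" by (simp add: cc_def)
      thus ?thesis using p0 by simp
    qed
    with u(1) show False by auto
  qed
  have "code_dim (cyclic_code n Z) = W.dim (W.span (bv ` {..<k}))" by (simp add: code_dim_def eq)
  also have "\<dots> = card (bv ` {..<k})" by (rule W.dim_span_eq_card_independent[OF indep])
  also have "\<dots> = k" using inj card_image by fastforce
  finally show ?thesis by (simp add: k_def)
qed

lemma min_dist_obtain:
  assumes "\<exists>x\<in>C. \<exists>y\<in>C. \<exists>i<n. x i \<noteq> y i"
  shows "\<exists>x\<in>C. \<exists>y\<in>C. (\<exists>i<n. x i \<noteq> y i) \<and> min_dist n C = hdist_on {..<n} x y"
proof -
  have "\<exists>w. \<exists>x\<in>C. \<exists>y\<in>C. (\<exists>i<n. x i \<noteq> y i) \<and> w = hdist_on {..<n} x y" using assms by blast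
  from LeastI_ex[OF this] show ?thesis unfolding min_dist_def by blast
qed

lemma min_dist_le:
  "x \<in> C \<Longrightarrow> y \<in> C \<Longrightarrow> \<exists>i<n. x i \<noteq> y i \<Longrightarrow> min_dist n C \<le> hdist_on {..<n} x y"
  unfolding min_dist_def by (rule Least_le) blast

lemma min_dist_ge:
  assumes "\<exists>x\<in>C. \<exists>y\<in>C. \<exists>i<n. x i \<noteq> y i"
    and "\<And>x y. x \<in> C \<Longrightarrow> y \<in> C \<Longrightarrow> \<exists>i<n. x i \<noteq> y i \<Longrightarrow> L \<le> hdist_on {..<n} x y"
  shows "L \<le> min_dist n C"
  using min_dist_obtain[OF assms(1)] assms(2) by metis

lemma hdist_eq: "hdist_on S x y = card {i\<in>S. (x - y) i \<noteq> (0::'a::ab_group_add)}"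
  by (simp add: hdist_on_def)

locale lrcset =
  fixes \<alpha> :: "'a::field" and n \<delta> b m t l :: nat
  assumes prim: "primitive_root_of_unity n \<alpha>" and d2: "2 \<le> \<delta>" and m1: "1 \<le> m"
    and cop: "coprime b n" and tn: "t < n" and l1: "m - 1 + \<delta> \<le> l" and l2: "l + \<delta> \<le> n"
begin

lemma n0: "n > 0" and an: "\<alpha>^n = 1" and a0: "\<alpha> \<noteq> 0"
  using prim by (auto simp: primitive_root_of_unity_def power_0_left split: if_splits)

lemma pow1: assumes "\<alpha>^e = 1" shows "n dvd e"
proof -
  have "\<alpha>^(e mod n) = 1" using assms pow_mod_n[OF an, of e] by simp
  moreover have "e mod n < n" using n0 by simp
  ultimately have "e mod n = 0" using prim unfolding primitive_root_of_unity_def by (meson neq0_conv)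
  thus ?thesis by (simp add: dvd_eq_mod_eq_0)
qed

definition "\<theta> = \<alpha>^b"
definition "a e = \<alpha>^t * \<theta>^e"

lemma theta_pow: "\<theta>^i = \<alpha>^(b*i)" by (simp add: \<theta>_def power_mult)

lemma theta_inj_aux: assumes "i \<le> j" "j < n" "\<theta>^i = \<theta>^j" shows "i = j"
proof -
  have "b*j = b*i + b*(j-i)" using assms(1) by (simp add: diff_mult_distrib2)
  hence "\<alpha>^(b*j) = \<alpha>^(b*i) * \<alpha>^(b*(j-i))" by (metis power_add)
  hence "\<alpha>^(b*(j-i)) = 1" using assms(3) a0 by (simp add: theta_pow)
  hence "n dvd b * (j - i)" by (rule pow1)
  hence "n dvd (j - i)" using cop by (simp add: coprime_commute coprime_dvd_mult_right_iff)
  moreover have "j - i < n" using assms by linarith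
  ultimately have "j - i = 0" using nat_dvd_not_less by blast
  thus ?thesis using assms by linarith
qed

lemma theta_inj: "i < n \<Longrightarrow> j < n \<Longrightarrow> \<theta>^i = \<theta>^j \<Longrightarrow> i = j"
  using theta_inj_aux by (metis nat_le_linear)

lemma theta0: "\<theta> \<noteq> 0" using a0 by (simp add: \<theta>_def)

lemma a_inj: "i < n \<Longrightarrow> j < n \<Longrightarrow> a i = a j \<Longrightarrow> i = j"
  using theta_inj a0 by (simp add: a_def)

lemma root_pow: "(\<alpha>^e)^n = 1" by (metis an power_mult mult.commute power_one)
lemma theta_root: "(\<theta>^e)^n = 1" by (simp add: theta_pow root_pow)
lemma a_root: "(a e)^n = 1" by (simp add: a_def power_mult_distrib theta_root root_pow)

end

context lrcset begin

definition "Aset = a ` ({..<m} \<union> {l})"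
definition "Bset = (\<lambda>j. \<theta>^j) ` {..\<delta>-2}"
definition "E = {..<m+\<delta>-2} \<union> {l..<l+\<delta>-1}"

lemma a_mult: "a j * \<theta>^i = a (j + i)" by (simp add: a_def power_add mult.assoc)

lemma E_sub: "E \<subseteq> {..<n}" using l1 l2 d2 by (auto simp: E_def)

lemma a_inj_E: "inj_on a E" using E_sub a_inj by (meson inj_onI subsetD lessThan_iff)

lemma AB_eq: "set_prod Aset Bset = a ` E"
proof (intro set_eqI iffI)
  fix x assume "x \<in> set_prod Aset Bset"
  then obtain j i where x: "x = a j * \<theta>^i" "j < m \<or> j = l" "i \<le> \<delta> - 2"
    by (auto simp: set_prod_def Aset_def Bset_def)
  hence "x = a (j + i)" by (simp add: a_mult)
  moreover have "j + i \<in> E" using x(2,3) d2 m1 by (auto simp: E_def)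
  ultimately show "x \<in> a ` E" by blast
next
  fix x assume "x \<in> a ` E"
  then obtain e where e: "e \<in> E" "x = a e" by auto
  have "\<exists>j i. (j < m \<or> j = l) \<and> i \<le> \<delta> - 2 \<and> e = j + i"
  proof (cases "e < m")
    case True thus ?thesis by (intro exI[of _ e] exI[of _ 0]) auto
  next
    case False
    show ?thesis
    proof (cases "e < m + \<delta> - 2")
      case True thus ?thesis using False d2 m1 by (intro exI[of _ "m-1"] exI[of _ "e-(m-1)"]) auto
    next
      case F2: False
      hence "l \<le> e" "e < l + \<delta> - 1" using e(1) by (auto simp: E_def)
      thus ?thesis by (intro exI[of _ l] exI[of _ "e - l"]) auto
    qed
  qed
  then obtain j i where ji: "j < m \<or> j = l" "i \<le> \<delta> - 2" "e = j + i" by blast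
  have "x = a j * \<theta>^i" using e ji by (simp add: a_mult)
  moreover have "a j \<in> Aset" using ji(1) by (auto simp: Aset_def)
  moreover have "\<theta>^i \<in> Bset" using ji(2) by (auto simp: Bset_def)
  ultimately show "x \<in> set_prod Aset Bset" by (auto simp: set_prod_def)
qed

lemma card_E: "card E = m + 2 * \<delta> - 3"
proof -
  have "card E = card {..<m+\<delta>-2} + card {l..<l+\<delta>-1}"
    unfolding E_def by (rule card_Un_disjoint) (use l1 in auto)
  thus ?thesis using d2 m1 by simp
qed

lemma card_AB: "card (set_prod Aset Bset) = m + 2 * \<delta> - 3"
  using AB_eq card_image[OF a_inj_E] card_E by simp

lemma fin_A: "finite Aset" by (simp add: Aset_def)
lemma fin_AB: "finite (set_prod Aset Bset)" by (simp add: AB_eq E_def)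
lemma root_A: "\<forall>\<beta>\<in>Aset. \<beta>^n = 1" by (auto simp: Aset_def a_root)
lemma root_AB: "\<forall>\<beta>\<in>set_prod Aset Bset. \<beta>^n = 1" by (auto simp: AB_eq a_root)

lemma CA_char: "cyclic_code n Aset = {v \<in> words n. \<forall>\<beta>\<in>Aset. ev n v \<beta> = 0}"
  by (rule cyc_char[OF n0 fin_A root_A])
lemma CAB_char: "cyclic_code n (set_prod Aset Bset) = {v \<in> words n. \<forall>\<beta>\<in>set_prod Aset Bset. ev n v \<beta> = 0}"
  by (rule cyc_char[OF n0 fin_AB root_AB])

lemma dim_CAB: "code_dim (cyclic_code n (set_prod Aset Bset)) = n + 3 - (m + 2 * \<delta>)"
  using code_dim_cyc[OF n0 fin_AB root_AB] card_AB l1 l2 d2 m1 by simp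

end

lemma bch_geo:
  fixes y :: "nat \<Rightarrow> 'a::field"
  assumes c: "c \<noteq> 0" and inj: "inj_on (\<lambda>i. \<rho>^i) {..<n}"
    and eqs: "\<forall>e<L. (\<Sum>i<n. y i * (c * \<rho>^e)^i) = 0" and nz: "\<exists>i<n. y i \<noteq> 0"
  shows "L < card {i. i < n \<and> y i \<noteq> 0}"
proof -
  have "L < card {i. i < n \<and> y i * c^i \<noteq> 0}"
  proof (rule bch[OF inj])
    show "\<forall>j<L. (\<Sum>i<n. y i * c ^ i * (\<rho> ^ i) ^ j) = 0"
      using eqs by (simp add: power_mult_distrib mult.assoc flip: power_mult) (simp add: mult.commute)
    show "\<exists>i<n. y i * c ^ i \<noteq> 0" using nz c by auto
  qed
  thus ?thesis using c by simp
qed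

context lrcset begin

definition "Dd = dual_code n (cyclic_code n Aset)"
definition "wt v = card {i. i < n \<and> v i \<noteq> 0}"

lemma Dd_words: "y \<in> Dd \<Longrightarrow> y \<in> words n" by (simp add: Dd_def dual_code_def)
lemma Dd_zero: "0 \<in> Dd" by (simp add: Dd_def dual_code_def words_def)
lemma Dd_diff: "x \<in> Dd \<Longrightarrow> y \<in> Dd \<Longrightarrow> x - y \<in> Dd"
  by (auto simp: Dd_def dual_code_def words_def right_diff_distrib sum_subtractf)

lemma CA_rot: "v \<in> cyclic_code n Aset \<Longrightarrow> rot n s v \<in> cyclic_code n Aset"
  using root_A by (auto simp: CA_char rot_words ev_rot[OF n0])

lemma CAB_rot: "v \<in> cyclic_code n (set_prod Aset Bset) \<Longrightarrow> rot n s v \<in> cyclic_code n (set_prod Aset Bset)"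
  using root_AB by (auto simp: CAB_char rot_words ev_rot[OF n0])

lemma CAB_diff: "x \<in> cyclic_code n (set_prod Aset Bset) \<Longrightarrow> y \<in> cyclic_code n (set_prod Aset Bset)
   \<Longrightarrow> x - y \<in> cyclic_code n (set_prod Aset Bset)"
  by (auto simp: CAB_char words_def ev_def left_diff_distrib sum_subtractf)

lemma Dd_rot: assumes y: "y \<in> Dd" shows "rot n s y \<in> Dd"
proof -
  define r where "r = n - s mod n"
  have "(\<Sum>k<n. c k * rot n s y k) = 0" if c: "c \<in> cyclic_code n Aset" for c
  proof -
    have "(\<Sum>k<n. c k * rot n s y k) = (\<Sum>k<n. (\<lambda>j. c ((j + r) mod n) * y j) ((k + s) mod n))"
    proof (rule sum.cong[OF refl])
      fix k assume "k \<in> {..<n}"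
      hence e: "((k + s) mod n + r) mod n = k" using rot_inv1[OF n0, of k s] by (simp add: r_def)
      show "c k * rot n s y k = (\<lambda>j. c ((j + r) mod n) * y j) ((k + s) mod n)"
        using \<open>k \<in> {..<n}\<close> by (simp only: e) (simp add: rot_def)
    qed
    also have "\<dots> = (\<Sum>j<n. c ((j + r) mod n) * y j)" by (rule rot_sum[OF n0])
    also have "\<dots> = (\<Sum>j<n. rot n r c j * y j)" by (simp add: rot_def)
    also have "\<dots> = 0" using y CA_rot[OF c, of r] by (simp add: Dd_def dual_code_def)
    finally show ?thesis .
  qed
  thus ?thesis by (simp add: Dd_def dual_code_def rot_words)
qed

definition "wv \<gamma> = (\<lambda>i. if i < n then \<gamma>^i else 0)"

lemma wv_Dd: "\<beta> \<in> Aset \<Longrightarrow> wv \<beta> \<in> Dd"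
  by (auto simp: Dd_def dual_code_def wv_def words_def CA_char ev_def)

lemma Dd_nontriv: "\<exists>x\<in>Dd. \<exists>y\<in>Dd. \<exists>i<n. x i \<noteq> y i"
proof -
  have "a 0 \<in> Aset" using m1 by (auto simp: Aset_def)
  moreover have "wv (a 0) 0 \<noteq> (0::nat\<Rightarrow>'a) 0" using n0 by (simp add: wv_def)
  ultimately show ?thesis using wv_Dd Dd_zero n0 by blast
qed

lemma wv_CA:
  assumes g: "\<gamma>^n = 1" and ne: "\<forall>\<beta>\<in>Aset. \<gamma> * \<beta> \<noteq> 1"
  shows "wv \<gamma> \<in> cyclic_code n Aset"
proof -
  have "ev n (wv \<gamma>) \<beta> = 0" if b: "\<beta> \<in> Aset" for \<beta>
  proof -
    have "ev n (wv \<gamma>) \<beta> = (\<Sum>i<n. (\<gamma> * \<beta>)^i)" by (simp add: ev_def wv_def power_mult_distrib)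
    also have "\<dots> = 0"
    proof -
      have "(\<gamma> * \<beta>)^n = 1" using b g root_A by (simp add: power_mult_distrib)
      moreover have "\<gamma> * \<beta> \<noteq> 1" using ne b by auto
      ultimately show ?thesis by (simp add: sum_gp_strict)
    qed
    finally show ?thesis .
  qed
  thus ?thesis by (simp add: CA_char wv_def words_def)
qed

lemma inv_theta_inj: "inj_on (\<lambda>i. (inverse \<theta>)^i) {..<n}"
  by (rule inj_onI) (use theta_inj in \<open>auto simp: power_inverse\<close>)
lemma theta_inj_on: "inj_on (\<lambda>i. \<theta>^i) {..<n}"
  by (rule inj_onI) (use theta_inj in auto)

lemma Dd_orth: "y \<in> Dd \<Longrightarrow> c \<in> cyclic_code n Aset \<Longrightarrow> (\<Sum>i<n. c i * y i) = 0"
  by (simp add: Dd_def dual_code_def)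

lemma Dd_run:
  assumes y: "y \<in> Dd" and j: "\<forall>e<L. j0 + e < n \<and> j0 + e \<notin> {..<m} \<union> {l}"
  shows "\<forall>e<L. (\<Sum>i<n. y i * (inverse (\<alpha>^t * \<theta>^j0) * inverse \<theta>^e)^i) = 0"
proof (intro allI impI)
  fix e assume e: "e < L"
  define \<gamma> where "\<gamma> = inverse (a (j0 + e))"
  have ga: "\<gamma> = inverse (\<alpha>^t * \<theta>^j0) * inverse \<theta>^e"
    by (simp add: \<gamma>_def a_def power_add power_inverse mult.assoc)
  have "\<gamma>^n = 1" by (simp add: \<gamma>_def power_inverse a_root)
  moreover have "\<forall>\<beta>\<in>Aset. \<gamma> * \<beta> \<noteq> 1"
  proof
    fix \<beta> assume "\<beta> \<in> Aset"
    then obtain j' where j': "j' < m \<or> j' = l" "\<beta> = a j'" by (auto simp: Aset_def)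
    have a0': "a (j0+e) \<noteq> 0" using a0 theta0 by (simp add: a_def)
    show "\<gamma> * \<beta> \<noteq> 1"
    proof
      assume "\<gamma> * \<beta> = 1"
      hence "a j' = a (j0 + e)" using a0' j'(2) by (simp add: \<gamma>_def field_simps)
      moreover have "j' < n" using j'(1) l1 l2 d2 by auto
      ultimately have "j' = j0 + e" using a_inj j e by auto
      thus False using j e j'(1) by auto
    qed
  qed
  ultimately have "wv \<gamma> \<in> cyclic_code n Aset" by (rule wv_CA)
  from Dd_orth[OF y this] have "(\<Sum>i<n. \<gamma>^i * y i) = 0" by (simp add: wv_def)
  thus "(\<Sum>i<n. y i * (inverse (\<alpha>^t * \<theta>^j0) * inverse \<theta>^e)^i) = 0"
    by (simp add: ga mult.commute)
qed

lemma Dd_weight: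
  assumes y: "y \<in> Dd" and nz: "\<exists>i<n. y i \<noteq> 0"
  shows "l - m < wt y" and "n - 1 - l < wt y"
proof -
  have c0: "inverse (\<alpha>^t * \<theta>^j0) \<noteq> 0" for j0 using a0 theta0 by simp
  have ij: "inj_on (\<lambda>i. (inverse \<theta>)^i) {..<n}" by (rule inv_theta_inj)
  have "\<forall>e<l-m. m + e < n \<and> m + e \<notin> {..<m} \<union> {l}" using l2 by auto
  from bch_geo[OF c0 ij Dd_run[OF y this] nz] show "l - m < wt y" by (simp add: wt_def)
  have "\<forall>e<n-1-l. Suc l + e < n \<and> Suc l + e \<notin> {..<m} \<union> {l}" using l1 by auto
  from bch_geo[OF c0 ij Dd_run[OF y this] nz] show "n - 1 - l < wt y" by (simp add: wt_def)
qed

end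

context lrcset begin

definition "dAp = min_dist n Dd"

lemma hd_wt: fixes x y :: "nat \<Rightarrow> 'a" shows "hdist_on {..<n} x y = wt (x - y)"
  unfolding hdist_on_def wt_def by (rule arg_cong[where f=card]) (auto simp: right_minus_eq)

lemma dAp_ge: "l - m < dAp" "n - 1 - l < dAp"
proof -
  have "Suc (l - m) \<le> dAp" unfolding dAp_def
  proof (rule min_dist_ge[OF Dd_nontriv])
    fix x y assume "x \<in> Dd" "y \<in> Dd" "\<exists>i<n. x i \<noteq> y i"
    thus "Suc (l - m) \<le> hdist_on {..<n} x y"
      using Dd_weight(1)[OF Dd_diff, of x y] by (simp add: hd_wt)
  qed
  thus "l - m < dAp" by simp
  have "Suc (n - 1 - l) \<le> dAp" unfolding dAp_def
  proof (rule min_dist_ge[OF Dd_nontriv])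
    fix x y assume "x \<in> Dd" "y \<in> Dd" "\<exists>i<n. x i \<noteq> y i"
    thus "Suc (n - 1 - l) \<le> hdist_on {..<n} x y"
      using Dd_weight(2)[OF Dd_diff, of x y] by (simp add: hd_wt)
  qed
  thus "n - 1 - l < dAp" by simp
qed

lemma dAp_delta: "\<delta> \<le> dAp" using dAp_ge(1) l1 m1 by linarith

lemma dAp_obtain: "\<exists>c\<in>Dd. (\<exists>i<n. c i \<noteq> 0) \<and> wt c = dAp"
proof -
  obtain x y where "x \<in> Dd" "y \<in> Dd" "\<exists>i<n. x i \<noteq> y i" "dAp = hdist_on {..<n} x y"
    using min_dist_obtain[OF Dd_nontriv] unfolding dAp_def by blast
  thus ?thesis using Dd_diff by (intro bexI[of _ "x - y"]) (auto simp: hd_wt)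
qed

lemma loc_key:
  assumes c: "c \<in> Dd" and f: "f \<in> cyclic_code n (set_prod Aset Bset)"
    and nz: "\<exists>k<n. f k * c k \<noteq> 0"
  shows "\<delta> - 1 < card {k. k < n \<and> f k * c k \<noteq> 0}"
proof -
  have nz': "\<exists>k<n. (\<lambda>k. f k * c k) k \<noteq> 0" using nz by simp
  have eqs: "\<forall>e<\<delta>-1. (\<Sum>i<n. (\<lambda>k. f k * c k) i * (1 * \<theta>^e)^i) = 0"
  proof (intro allI impI)
    fix e assume e: "e < \<delta> - 1"
    define h where "h = (\<lambda>k. f k * (\<theta>^e)^k)"
    have fw: "f \<in> words n" and fe: "\<forall>\<beta>\<in>set_prod Aset Bset. ev n f \<beta> = 0" using f by (auto simp: CAB_char)
    have "h \<in> cyclic_code n Aset"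
    proof -
      have "ev n h \<beta> = 0" if b: "\<beta> \<in> Aset" for \<beta>
      proof -
        have "\<theta>^e \<in> Bset" using e by (auto simp: Bset_def)
        hence "\<beta> * \<theta>^e \<in> set_prod Aset Bset" using b by (auto simp: set_prod_def)
        hence "ev n f (\<beta> * \<theta>^e) = 0" using fe by blast
        thus ?thesis by (simp add: h_def ev_def power_mult_distrib mult_ac)
      qed
      moreover have "h \<in> words n" using fw by (simp add: h_def words_def)
      ultimately show ?thesis by (simp add: CA_char)
    qed
    from Dd_orth[OF c this] show "(\<Sum>i<n. (\<lambda>k. f k * c k) i * (1 * \<theta>^e)^i) = 0"
      by (simp add: h_def mult_ac power_mult[symmetric])
  qed
  from bch_geo[OF one_neq_zero theta_inj_on eqs nz'] show ?thesis by simp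
qed

lemma CAB_weight:
  assumes f: "f \<in> cyclic_code n (set_prod Aset Bset)" and nz: "\<exists>k<n. f k \<noteq> 0"
  shows "m + \<delta> - 2 < wt f"
proof -
  have c0: "\<alpha>^t \<noteq> 0" using a0 by simp
  have "\<forall>e<m+\<delta>-2. (\<Sum>i<n. f i * (\<alpha>^t * \<theta>^e)^i) = 0"
  proof (intro allI impI)
    fix e assume "e < m + \<delta> - 2"
    hence "a e \<in> set_prod Aset Bset" by (simp add: AB_eq E_def)
    hence "ev n f (a e) = 0" using f by (simp add: CAB_char)
    thus "(\<Sum>i<n. f i * (\<alpha>^t * \<theta>^e)^i) = 0" by (simp add: ev_def a_def)
  qed
  from bch_geo[OF c0 theta_inj_on this nz] show ?thesis by (simp add: wt_def)
qed

end

context lrcset begin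

lemma is_LRC_CAB: "is_LRC n (cyclic_code n (set_prod Aset Bset)) (dAp + 1 - \<delta>) \<delta>"
  unfolding is_LRC_def
proof (intro conjI allI impI)
  show "1 \<le> dAp + 1 - \<delta>" using dAp_delta by simp
  show "2 \<le> \<delta>" by (rule d2)
  fix i assume i: "i < n"
  obtain c p where c: "c \<in> Dd" "p < n" "c p \<noteq> 0" "wt c = dAp" using dAp_obtain by blast
  define s where "s = (p + n - i) mod n"
  define c' where "c' = rot n s c"
  have c'D: "c' \<in> Dd" by (simp add: c'_def Dd_rot c(1))
  have "(i + s) mod n = p"
  proof -
    have "(i + s) mod n = (i + (p + n - i)) mod n" by (simp add: s_def mod_add_right_eq)
    also have "i + (p + n - i) = p + n" using i by simp
    finally show ?thesis using c(2) by simp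
  qed
  hence ci: "c' i \<noteq> 0" using i c(3) by (simp add: c'_def rot_def)
  define S where "S = {k. k < n \<and> c' k \<noteq> 0}"
  have cS: "card S = dAp" using rot_weight[OF n0, of s c] c(4) by (simp add: S_def c'_def wt_def)
  show "has_locality n (cyclic_code n (set_prod Aset Bset)) (dAp + 1 - \<delta>) \<delta> i"
    unfolding has_locality_def
  proof (intro exI[of _ S] conjI)
    show "S \<subseteq> {..<n}" by (auto simp: S_def)
    show "i \<in> S" using i ci by (simp add: S_def)
    show "card S \<le> dAp + 1 - \<delta> + \<delta> - 1" using cS dAp_delta by simp
    show "punct_dist_ge (cyclic_code n (set_prod Aset Bset)) S \<delta>"
      unfolding punct_dist_ge_def
    proof (intro ballI impI)
      fix x y assume x: "x \<in> cyclic_code n (set_prod Aset Bset)" and y: "y \<in> cyclic_code n (set_prod Aset Bset)"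
        and d: "\<exists>i\<in>S. x i \<noteq> y i"
      define f where "f = x - y"
      have fC: "f \<in> cyclic_code n (set_prod Aset Bset)" using CAB_diff[OF x y] by (simp add: f_def)
      have eq: "{k\<in>S. f k \<noteq> 0} = {k. k < n \<and> f k * c' k \<noteq> 0}" by (auto simp: S_def)
      have nz: "\<exists>k<n. f k * c' k \<noteq> 0" using d by (auto simp: S_def f_def)
      have "\<delta> - 1 < card {k. k < n \<and> f k * c' k \<noteq> 0}" by (rule loc_key[OF c'D fC nz])
      thus "\<delta> \<le> hdist_on S x y" using eq by (simp add: hdist_eq f_def)
    qed
  qed
qed

end

lemma exists_zero_on:
  fixes Z :: "'a::field set"
  assumes fin: "finite (UNIV::'a set)" and n: "n > 0" and fZ: "finite Z" and rZ: "\<forall>\<beta>\<in>Z. \<beta>^n = 1"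
    and T: "T \<subseteq> {..<n}" and cT: "card T < n - card Z"
  shows "\<exists>f\<in>cyclic_code n Z. (\<exists>i<n. f i \<noteq> 0) \<and> (\<forall>i\<in>T. f i = 0)"
proof -
  let ?g = "\<Prod>\<beta>\<in>Z. [:-\<beta>,1:]"
  define k where "k = n - card Z"
  define P where "P u = (\<Sum>j<k. monom (u j) j)" for u :: "nat \<Rightarrow> 'a"
  define \<Phi> where "\<Phi> u = restrict (\<lambda>i. coeff (P u * ?g) i) T" for u
  define Dom where "Dom = PiE {..<k} (\<lambda>_. (UNIV::'a set))"
  have g0: "?g \<noteq> 0" using fZ by (simp add: prod_zero_iff)
  have dg: "degree ?g = card Z" by (subst degree_prod_eq_sum_degree) auto
  have fT: "finite T" using T finite_subset by blast
  have q2: "2 \<le> card (UNIV::'a set)"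
  proof -
    have "card {0::'a, 1} = 2" by simp
    moreover have "card {0::'a, 1} \<le> card (UNIV::'a set)" by (rule card_mono[OF fin]) auto
    ultimately show ?thesis by simp
  qed
  have cD: "card Dom = card (UNIV::'a set) ^ k" by (simp add: Dom_def card_PiE)
  have sub: "\<Phi> ` Dom \<subseteq> PiE T (\<lambda>_. (UNIV::'a set))" by (auto simp: \<Phi>_def)
  have cP: "card (PiE T (\<lambda>_. (UNIV::'a set))) = card (UNIV::'a set) ^ card T" using fT by (simp add: card_PiE)
  have lt: "card (UNIV::'a set) ^ card T < card (UNIV::'a set) ^ k"
    using cT q2 by (intro power_strict_increasing) (auto simp: k_def)
  have "\<not> inj_on \<Phi> Dom"
  proof
    assume "inj_on \<Phi> Dom"
    hence "card Dom = card (\<Phi> ` Dom)" by (simp add: card_image)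
    also have "\<dots> \<le> card (PiE T (\<lambda>_. (UNIV::'a set)))" by (rule card_mono[OF _ sub]) (simp add: finite_PiE fT fin)
    finally show False using cD cP lt by simp
  qed
  then obtain u1 u2 where u: "u1 \<in> Dom" "u2 \<in> Dom" "u1 \<noteq> u2" "\<Phi> u1 = \<Phi> u2"
    unfolding inj_on_def by blast
  obtain j where j: "j < k" "u1 j \<noteq> u2 j"
    using u(1-3) PiE_ext[of u1 "{..<k}" "\<lambda>_. UNIV" u2] by (auto simp: Dom_def)
  define h where "h = P u1 - P u2"
  have ch: "coeff h i = (if i < k then u1 i - u2 i else 0)" for i
    by (simp add: h_def P_def coeff_sum coeff_monom)
  have h0: "h \<noteq> 0" using ch[of j] j by auto
  have dh: "degree h < k" by (rule degree_lessI) (use j ch in auto)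
  have dhg: "degree (h * ?g) < n" using h0 g0 dh dg by (simp add: degree_mult_eq k_def)
  define f where "f = (\<lambda>i. coeff (h * ?g) i)"
  have "f \<in> cyclic_code n Z"
  proof -
    have "poly ?g \<beta> = 0" if "\<beta> \<in> Z" for \<beta> using that fZ by (auto simp: poly_prod)
    thus ?thesis using dhg unfolding cyc_char[OF n fZ rZ] f_def by (simp add: coeff_words ev_coeff)
  qed
  moreover have "\<exists>i<n. f i \<noteq> 0"
    using dhg h0 g0 by (intro exI[of _ "degree (h * ?g)"]) (simp add: f_def)
  moreover have "\<forall>i\<in>T. f i = 0"
  proof
    fix i assume i: "i \<in> T"
    have "\<Phi> u1 i = \<Phi> u2 i" using u(4) by simp
    hence "coeff (P u1 * ?g) i = coeff (P u2 * ?g) i" using i by (simp add: \<Phi>_def)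
    thus "f i = 0" by (simp add: f_def h_def left_diff_distrib)
  qed
  ultimately show ?thesis by blast
qed

context lrcset begin

lemma CAB_zero: "0 \<in> cyclic_code n (set_prod Aset Bset)"
  by (simp add: CAB_char words_def ev_def)

lemma min_dist_CAB:
  assumes fin: "finite (UNIV::'a set)" and hyp: "int \<delta> - 2 < int n - int m - int dAp"
  shows "min_dist n (cyclic_code n (set_prod Aset Bset)) = m + \<delta> - 1"
proof -
  let ?C = "cyclic_code n (set_prod Aset Bset)"
  have h1: "\<delta> + m + dAp \<le> n + 1" using hyp by linarith
  have dd: "\<delta> \<le> dAp" by (rule dAp_delta)
  obtain c where c: "c \<in> Dd" "\<exists>i<n. c i \<noteq> 0" "wt c = dAp" using dAp_obtain by blast
  define S where "S = {k. k < n \<and> c k \<noteq> 0}"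
  have cS: "card S = dAp" using c(3) by (simp add: S_def wt_def)
  have fS: "finite S" by (simp add: S_def)
  have le1: "\<delta> - 1 \<le> card S" using cS dd by simp
  obtain D0 where D0: "D0 \<subseteq> S" "card D0 = \<delta> - 1"
    using obtain_subset_with_card_n[OF le1] by blast
  have fD0: "finite D0" using D0(1) fS finite_subset by blast
  define T0 where "T0 = S - D0"
  have cT0: "card T0 = dAp - (\<delta> - 1)" using D0 cS fD0 by (simp add: T0_def card_Diff_subset)
  define Sc where "Sc = {..<n} - S"
  have cSc: "card Sc = n - dAp" using cS by (simp add: Sc_def card_Diff_subset S_def subset_eq)
  have le2: "n + 1 - m - \<delta> - dAp \<le> card Sc" using cSc m1 by simp
  obtain T1 where T1: "T1 \<subseteq> Sc" "card T1 = n + 1 - m - \<delta> - dAp"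
    using obtain_subset_with_card_n[OF le2] by blast
  define T where "T = T0 \<union> T1"
  have fT1: "finite T1" using T1(1) finite_subset by (auto simp: Sc_def)
  have fT0: "finite T0" using fS by (simp add: T0_def)
  have dis: "T0 \<inter> T1 = {}" using T1(1) by (auto simp: T0_def Sc_def)
  have cT: "card T = dAp - (\<delta> - 1) + (n + 1 - m - \<delta> - dAp)"
    using card_Un_disjoint[OF fT0 fT1 dis] cT0 T1(2) by (simp add: T_def)
  have Tsub: "T \<subseteq> {..<n}" using T1(1) by (auto simp: T_def T0_def S_def Sc_def)
  have "card T < n - card (set_prod Aset Bset)" using cT card_AB h1 dd d2 l1 l2 m1 by simp
  from exists_zero_on[OF fin n0 fin_AB root_AB Tsub this]
  obtain f where f: "f \<in> ?C" "\<exists>i<n. f i \<noteq> 0" "\<forall>i\<in>T. f i = 0" by blast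
  have fS0: "\<forall>i\<in>S. f i = 0"
  proof (rule ccontr)
    assume "\<not> (\<forall>i\<in>S. f i = 0)"
    then obtain i where "i \<in> S" "f i \<noteq> 0" by blast
    hence nz: "\<exists>k<n. f k * c k \<noteq> 0" by (auto simp: S_def)
    have "\<delta> - 1 < card {k. k < n \<and> f k * c k \<noteq> 0}" by (rule loc_key[OF c(1) f(1) nz])
    moreover have "{k. k < n \<and> f k * c k \<noteq> 0} \<subseteq> D0" using f(3) by (auto simp: T_def T0_def S_def)
    hence "card {k. k < n \<and> f k * c k \<noteq> 0} \<le> card D0" by (rule card_mono[OF fD0])
    ultimately show False using D0(2) by simp
  qed
  have supp: "{i. i < n \<and> f i \<noteq> 0} \<subseteq> {..<n} - (S \<union> T1)" using fS0 f(3) by (auto simp: T_def)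
  have dis2: "S \<inter> T1 = {}" using T1(1) by (auto simp: Sc_def)
  have "card (S \<union> T1) = dAp + (n + 1 - m - \<delta> - dAp)"
    using card_Un_disjoint[OF fS fT1 dis2] cS T1(2) by simp
  moreover have "S \<union> T1 \<subseteq> {..<n}" using T1(1) by (auto simp: S_def Sc_def)
  ultimately have "card ({..<n} - (S \<union> T1)) = n - (dAp + (n + 1 - m - \<delta> - dAp))"
    using card_Diff_subset[of "S \<union> T1" "{..<n}"] fS fT1 by simp
  hence wf: "wt f \<le> m + \<delta> - 1" using card_mono[OF _ supp] h1 by (simp add: wt_def)
  have "\<exists>i<n. f i \<noteq> (0::nat\<Rightarrow>'a) i" using f(2) by simp
  hence ex: "\<exists>x\<in>?C. \<exists>y\<in>?C. \<exists>i<n. x i \<noteq> y i" using f(1) CAB_zero by blast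
  have "min_dist n ?C \<le> hdist_on {..<n} f 0" by (rule min_dist_le[OF f(1) CAB_zero]) (use f(2) in simp)
  hence up: "min_dist n ?C \<le> m + \<delta> - 1" using wf by (simp add: hd_wt)
  have "Suc (m + \<delta> - 2) \<le> min_dist n ?C"
  proof (rule min_dist_ge[OF ex])
    fix x y assume "x \<in> ?C" "y \<in> ?C" "\<exists>i<n. x i \<noteq> y i"
    thus "Suc (m + \<delta> - 2) \<le> hdist_on {..<n} x y"
      using CAB_weight[OF CAB_diff, of x y] by (simp add: hd_wt)
  qed
  thus ?thesis using up d2 m1 by simp
qed

lemma ceil2: assumes hyp: "int \<delta> - 2 < int n - int m - int dAp"
  shows "\<lceil>real (n + 3 - (m + 2 * \<delta>)) / real (dAp + 1 - \<delta>)\<rceil> = 2"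
proof -
  have dd: "\<delta> \<le> dAp" by (rule dAp_delta)
  have g: "l - m < dAp" "n - 1 - l < dAp" by (rule dAp_ge)+
  have r0: "real (dAp + 1 - \<delta>) > 0" using dd by simp
  have A: "dAp + 1 - \<delta> < n + 3 - (m + 2 * \<delta>)" using hyp dd l1 l2 m1 d2 by linarith
  have B: "n + 3 - (m + 2 * \<delta>) \<le> 2 * (dAp + 1 - \<delta>)" using g dd l1 l2 m1 d2 by linarith
  show ?thesis
  proof (rule ceiling_unique)
    show "real_of_int 2 - 1 < real (n + 3 - (m + 2 * \<delta>)) / real (dAp + 1 - \<delta>)"
      using A r0 by (simp add: less_divide_eq)
    show "real (n + 3 - (m + 2 * \<delta>)) / real (dAp + 1 - \<delta>) \<le> real_of_int 2"
    proof -
      have "real (n + 3 - (m + 2 * \<delta>)) \<le> 2 * real (dAp + 1 - \<delta>)" using B by linarith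
      thus ?thesis using r0 by (simp add: divide_le_eq)
    qed
  qed
qed

end

theorem corollary4p5:
  fixes \<alpha> :: "'a::{field,finite}" and n \<delta> b m t l :: nat
  assumes "n dvd (card (UNIV :: 'a set) - 1)"
    and "primitive_root_of_unity n \<alpha>"
    and "2 \<le> \<delta>" and "1 \<le> b" and "1 \<le> m" and "coprime b n"
    and "t < n"
    and "m - 1 + \<delta> \<le> l" and "l + \<delta> \<le> n"
  defines "A \<equiv> (\<lambda>j. \<alpha> ^ (t + j * b)) ` {..<m} \<union> {\<alpha> ^ (t + l * b)}"
    and "B \<equiv> (\<lambda>j. \<alpha> ^ (j * b)) ` {..\<delta> - 2}"
    and "dAp \<equiv> min_dist n (dual_code n (cyclic_code n ((\<lambda>j. \<alpha> ^ (t + j * b)) ` {..<m} \<union> {\<alpha> ^ (t + l * b)})))"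
  shows "is_cyclic n (cyclic_code n (set_prod A B))
       \<and> is_LRC n (cyclic_code n (set_prod A B)) (dAp + 1 - \<delta>) \<delta>
       \<and> code_dim (cyclic_code n (set_prod A B)) = n + 3 - (m + 2 * \<delta>)
       \<and> (int \<delta> - 2 < int n - int m - int dAp \<longrightarrow>
            is_optimal_LRC n (cyclic_code n (set_prod A B)) (dAp + 1 - \<delta>) \<delta>
            \<and> min_dist n (cyclic_code n (set_prod A B)) = m + \<delta> - 1)"
proof -
  interpret L: lrcset \<alpha> n \<delta> b m t l
    by unfold_locales (use assms(2,3,5,6,7,8,9) in auto)
  have pw: "\<alpha> ^ (t + j * b) = L.a j" for j
    by (simp add: L.a_def L.\<theta>_def power_add power_mult mult.commute)
  have Aeq: "(\<lambda>j. \<alpha> ^ (t + j * b)) ` {..<m} \<union> {\<alpha> ^ (t + l * b)} = L.Aset"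
    by (simp add: L.Aset_def pw image_Un)
  have pb: "\<alpha> ^ (j * b) = L.\<theta> ^ j" for j by (simp add: L.theta_pow mult.commute)
  have Beq: "B = L.Bset"
    by (simp add: B_def L.Bset_def pb)
  have AAeq: "A = L.Aset" using Aeq by (simp add: A_def)
  have dEq: "dAp = L.dAp" unfolding dAp_def L.dAp_def L.Dd_def Aeq ..
  have cyc: "is_cyclic n (cyclic_code n (set_prod A B))"
    unfolding is_cyclic_def
  proof
    fix c assume "c \<in> cyclic_code n (set_prod A B)"
    hence "rot n (n - 1) c \<in> cyclic_code n (set_prod A B)" using L.CAB_rot by (simp add: AAeq Beq)
    moreover have "rot n (n - 1) c = (\<lambda>i. if i < n then c ((i + n - 1) mod n) else 0)"
      using L.n0 by (auto simp: rot_def fun_eq_iff)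
    ultimately show "(\<lambda>i. if i < n then c ((i + n - 1) mod n) else 0) \<in> cyclic_code n (set_prod A B)" by simp
  qed
  have opt: "is_optimal_LRC n (cyclic_code n (set_prod A B)) (dAp + 1 - \<delta>) \<delta>
            \<and> min_dist n (cyclic_code n (set_prod A B)) = m + \<delta> - 1"
    if hyp: "int \<delta> - 2 < int n - int m - int dAp"
  proof -
    have hyp': "int \<delta> - 2 < int n - int m - int L.dAp" using hyp dEq by simp
    have md: "min_dist n (cyclic_code n (set_prod A B)) = m + \<delta> - 1"
      using L.min_dist_CAB[OF finite_UNIV hyp'] by (simp add: AAeq Beq)
    have "int (m + \<delta> - 1) = int n - int (n + 3 - (m + 2 * \<delta>)) - (2 - 1) * (int \<delta> - 1) + 1"
    proof -
      have e1: "m + 2 * \<delta> \<le> n + 3" using assms(3,5,8,9) by linarith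
      have e2: "1 \<le> m + \<delta>" using assms(5) by linarith
      show ?thesis using e1 e2 by (simp add: of_nat_diff algebra_simps)
    qed
    thus ?thesis using md L.is_LRC_CAB L.ceil2[OF hyp'] L.dim_CAB
      by (simp add: is_optimal_LRC_def AAeq Beq dEq)
  qed
  show ?thesis using cyc L.is_LRC_CAB L.dim_CAB opt by (simp add: AAeq Beq dEq)
qed

end
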